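(* Let $L\subseteq Q$ be an extension of Lie algebras with $L$ semiprime. Then the following are equivalent: (i) $Q$ is an algebra of quotients of $L$; (ii) $Z(Q)=0$ and, for every $\mu\in A(Q)\setminus\{0\}$, there is an ideal $I$ of $L$ with $\mathrm{Ann}_L(I)=0$ such that $\mu\widetilde{I}\subseteq A_0$ and $0\neq \widetilde{I}\mu\subseteq A_0$, and moreover, if $\mu=\mathrm{ad}_q$ for some $q\in Q$, then also $\mu\widetilde{I}(L)\neq 0$ (i.e. there are $\alpha\in\widetilde I$ and $x\in L$ with $\mu(\alpha(x))\neq 0$).
   Context: All algebras are over a fixed commutative unital ring $\Phi$; associative algebras need not be unital. For a Lie algebra $Q$ and $x\in Q$, $\mathrm{ad}_x\colon Q\to Q$ is $y\mapsto[x,y]$, and $A(Q)$ is the associative subalgebra of $\mathrm{End}_\Phi(Q)$ generated by $\{\mathrm{ad}_x: x\in Q\}$. An extension of Lie algebras $L\subseteq Q$ means $L$ is a Lie subalgebra of $Q$. $A_Q(L)$ is the associative subalgebra of $A(Q)$ generated by $\{\mathrm{ad}_x:x\in L\}$ (operators on $Q$), and $A_0=\{\mu\in A(Q):\mu(L)\subseteq L\}$. For an ideal $I$ of $L$, $A_Q(I)$ is the subalgebra of $A(Q)$ generated by $\{\mathrm{ad}_x : x\in I\}$ and $\widetilde I$ denotes the two-sided ideal of $A_Q(L)$ generated by $\{\mathrm{ad}_x:x\in I\}$. For $X\subseteq L$, $\mathrm{Ann}_L(X)=\{a\in L: [a,x]=0\ \forall x\in X\}$ and $Z(L)=\mathrm{Ann}_L(L)$.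 A Lie algebra $L$ is semiprime if $[I,I]\neq0$ for every nonzero ideal $I$. $Q$ is an algebra of quotients of $L$ if for every nonzero $q\in Q$ there is an ideal $I$ of $L$ with $\mathrm{Ann}_L(I)=0$ and $0\neq[I,q]\subseteq L$. *)

theory Defs
  imports Main "HOL.Modules"
begin

text \<open>A Lie algebra over the commutative ring 'r is modelled on the whole type 'q:
  scale is the Phi-module structure, br the Lie bracket.\<close>

definition lie_algebra :: "('r::comm_ring_1 \<Rightarrow> 'q::ab_group_add \<Rightarrow> 'q) \<Rightarrow> ('q \<Rightarrow> 'q \<Rightarrow> 'q) \<Rightarrow> bool" where
  "lie_algebra scale br \<longleftrightarrow> module scale
    \<and> (\<forall>x y z. br (x + y) z = br x z + br y z)
    \<and> (\<forall>x y z. br x (y + z) = br x y + br x z)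
    \<and> (\<forall>c x y. br (scale c x) y = scale c (br x y))
    \<and> (\<forall>c x y. br x (scale c y) = scale c (br x y))
    \<and> (\<forall>x. br x x = 0)
    \<and> (\<forall>x y z. br x (br y z) + br y (br z x) + br z (br x y) = 0)"

definition submod :: "('r::comm_ring_1 \<Rightarrow> 'q::ab_group_add \<Rightarrow> 'q) \<Rightarrow> 'q set \<Rightarrow> bool" where
  "submod scale S \<longleftrightarrow> 0 \<in> S \<and> (\<forall>x\<in>S. \<forall>y\<in>S. x + y \<in> S) \<and> (\<forall>c. \<forall>x\<in>S. scale c x \<in> S)"

definition lie_subalgebra :: "('r::comm_ring_1 \<Rightarrow> 'q::ab_group_add \<Rightarrow> 'q) \<Rightarrow> ('q \<Rightarrow> 'q \<Rightarrow> 'q) \<Rightarrow> 'q set \<Rightarrow> bool" where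
  "lie_subalgebra scale br L \<longleftrightarrow> submod scale L \<and> (\<forall>x\<in>L. \<forall>y\<in>L. br x y \<in> L)"

definition lie_ideal :: "('r::comm_ring_1 \<Rightarrow> 'q::ab_group_add \<Rightarrow> 'q) \<Rightarrow> ('q \<Rightarrow> 'q \<Rightarrow> 'q) \<Rightarrow> 'q set \<Rightarrow> 'q set \<Rightarrow> bool" where
  "lie_ideal scale br L I \<longleftrightarrow> I \<subseteq> L \<and> submod scale I \<and> (\<forall>x\<in>L. \<forall>a\<in>I. br x a \<in> I)"

definition Ann :: "('q \<Rightarrow> 'q \<Rightarrow> 'q::zero) \<Rightarrow> 'q set \<Rightarrow> 'q set \<Rightarrow> 'q set" where
  "Ann br L X = {a \<in> L. \<forall>x\<in>X. br a x = 0}"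

definition center :: "('q \<Rightarrow> 'q \<Rightarrow> 'q::zero) \<Rightarrow> 'q set \<Rightarrow> 'q set" where
  "center br L = Ann br L L"

definition semiprime :: "('r::comm_ring_1 \<Rightarrow> 'q::ab_group_add \<Rightarrow> 'q) \<Rightarrow> ('q \<Rightarrow> 'q \<Rightarrow> 'q) \<Rightarrow> 'q set \<Rightarrow> bool" where
  "semiprime scale br L \<longleftrightarrow>
     (\<forall>I. lie_ideal scale br L I \<and> I \<noteq> {0} \<longrightarrow> (\<exists>a\<in>I. \<exists>b\<in>I. br a b \<noteq> 0))"

definition ad :: "('q \<Rightarrow> 'q \<Rightarrow> 'q) \<Rightarrow> 'q \<Rightarrow> 'q \<Rightarrow> 'q" where
  "ad br x = (\<lambda>y. br x y)"

inductive_set gen_alg :: "('r::comm_ring_1 \<Rightarrow> 'q::ab_group_add \<Rightarrow> 'q) \<Rightarrow> ('q \<Rightarrow> 'q) set \<Rightarrow> ('q \<Rightarrow> 'q) set"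
  for scale G where
  gen: "f \<in> G \<Longrightarrow> f \<in> gen_alg scale G"
| zero: "(\<lambda>_. 0) \<in> gen_alg scale G"
| add: "f \<in> gen_alg scale G \<Longrightarrow> g \<in> gen_alg scale G \<Longrightarrow> (\<lambda>v. f v + g v) \<in> gen_alg scale G"
| smult: "f \<in> gen_alg scale G \<Longrightarrow> (\<lambda>v. scale c (f v)) \<in> gen_alg scale G"
| comp: "f \<in> gen_alg scale G \<Longrightarrow> g \<in> gen_alg scale G \<Longrightarrow> f \<circ> g \<in> gen_alg scale G"

inductive_set gen_ideal :: "('r::comm_ring_1 \<Rightarrow> 'q::ab_group_add \<Rightarrow> 'q) \<Rightarrow> ('q \<Rightarrow> 'q) set \<Rightarrow> ('q \<Rightarrow> 'q) set \<Rightarrow> ('q \<Rightarrow> 'q) set"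
  for scale B G where
  gen: "f \<in> G \<Longrightarrow> f \<in> gen_ideal scale B G"
| zero: "(\<lambda>_. 0) \<in> gen_ideal scale B G"
| add: "f \<in> gen_ideal scale B G \<Longrightarrow> g \<in> gen_ideal scale B G \<Longrightarrow> (\<lambda>v. f v + g v) \<in> gen_ideal scale B G"
| smult: "f \<in> gen_ideal scale B G \<Longrightarrow> (\<lambda>v. scale c (f v)) \<in> gen_ideal scale B G"
| lmult: "b \<in> B \<Longrightarrow> f \<in> gen_ideal scale B G \<Longrightarrow> b \<circ> f \<in> gen_ideal scale B G"
| rmult: "b \<in> B \<Longrightarrow> f \<in> gen_ideal scale B G \<Longrightarrow> f \<circ> b \<in> gen_ideal scale B G"

definition AQ :: "('r::comm_ring_1 \<Rightarrow> 'q::ab_group_add \<Rightarrow> 'q) \<Rightarrow> ('q \<Rightarrow> 'q \<Rightarrow> 'q) \<Rightarrow> ('q \<Rightarrow> 'q) set" where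
  "AQ scale br = gen_alg scale {ad br x | x. True}"

definition AQL :: "('r::comm_ring_1 \<Rightarrow> 'q::ab_group_add \<Rightarrow> 'q) \<Rightarrow> ('q \<Rightarrow> 'q \<Rightarrow> 'q) \<Rightarrow> 'q set \<Rightarrow> ('q \<Rightarrow> 'q) set" where
  "AQL scale br L = gen_alg scale {ad br x | x. x \<in> L}"

definition A0 :: "('r::comm_ring_1 \<Rightarrow> 'q::ab_group_add \<Rightarrow> 'q) \<Rightarrow> ('q \<Rightarrow> 'q \<Rightarrow> 'q) \<Rightarrow> 'q set \<Rightarrow> ('q \<Rightarrow> 'q) set" where
  "A0 scale br L = {\<mu> \<in> AQ scale br. \<mu> ` L \<subseteq> L}"

definition Itilde :: "('r::comm_ring_1 \<Rightarrow> 'q::ab_group_add \<Rightarrow> 'q) \<Rightarrow> ('q \<Rightarrow> 'q \<Rightarrow> 'q) \<Rightarrow> 'q set \<Rightarrow> 'q set \<Rightarrow> ('q \<Rightarrow> 'q) set" where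
  "Itilde scale br L I = gen_ideal scale (AQL scale br L) {ad br x | x. x \<in> I}"

definition algebra_of_quotients :: "('r::comm_ring_1 \<Rightarrow> 'q::ab_group_add \<Rightarrow> 'q) \<Rightarrow> ('q \<Rightarrow> 'q \<Rightarrow> 'q) \<Rightarrow> 'q set \<Rightarrow> bool" where
  "algebra_of_quotients scale br L \<longleftrightarrow>
     (\<forall>q. q \<noteq> 0 \<longrightarrow> (\<exists>I. lie_ideal scale br L I \<and> Ann br L I = {0}
         \<and> (\<exists>x\<in>I. br x q \<noteq> 0) \<and> (\<forall>x\<in>I. br x q \<in> L)))"

end

theory Submission
  imports Defs
begin

inductive_set brspan :: "('r::comm_ring_1 \<Rightarrow> 'q::ab_group_add \<Rightarrow> 'q) \<Rightarrow> ('q \<Rightarrow> 'q \<Rightarrow> 'q) \<Rightarrow> 'q set \<Rightarrow> 'q set"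
  for scale br K where
  gen: "a \<in> K \<Longrightarrow> b \<in> K \<Longrightarrow> br a b \<in> brspan scale br K"
| zero: "0 \<in> brspan scale br K"
| add: "x \<in> brspan scale br K \<Longrightarrow> y \<in> brspan scale br K \<Longrightarrow> x + y \<in> brspan scale br K"
| smult: "x \<in> brspan scale br K \<Longrightarrow> scale c x \<in> brspan scale br K"

definition Dset :: "('q \<Rightarrow> 'q \<Rightarrow> 'q) \<Rightarrow> 'q set \<Rightarrow> 'q set \<Rightarrow> 'q set" where
  "Dset br L I = {z. \<forall>x\<in>I. br x z \<in> L}"

lemma gen_alg_maps:
  assumes S: "submod scale S" and G: "\<And>g s. g \<in> G \<Longrightarrow> s \<in> S \<Longrightarrow> g s \<in> S"
    and f: "f \<in> gen_alg scale G"
  shows "\<And>s. s \<in> S \<Longrightarrow> f s \<in> S"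
  using f
proof induction
  case (gen f) then show ?case using G by blast
next
  case zero then show ?case using S unfolding submod_def by simp
next
  case (add f g) then show ?case using S unfolding submod_def by simp
next
  case (smult f c) then show ?case using S unfolding submod_def by simp
next
  case (comp f g) then show ?case by simp
qed

lemma gen_alg_lin:
  assumes G: "\<And>g x y. g \<in> G \<Longrightarrow> g (x + y) = g x + g y"
    and G2: "\<And>g c x. g \<in> G \<Longrightarrow> g (scale c x) = scale c (g x)"
    and M: "module scale"
    and f: "f \<in> gen_alg scale G"
  shows "(\<forall>x y. f (x + y) = f x + f y) \<and> (\<forall>c x. f (scale c x) = scale c (f x))"
  using f
proof induction
  case (gen f) then show ?case using G G2 by blast
next
  case zero then show ?case using M by (simp add: module.scale_zero_right)
next
  case (add f g) then show ?case using M by (simp add: module.scale_right_distrib algebra_simps)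
next
  case (smult f c) then show ?case using M by (simp add: module.scale_right_distrib module.scale_left_commute)
next
  case (comp f g) then show ?case by simp
qed

lemma gen_ideal_maps:
  assumes T: "submod scale T"
    and G: "\<forall>g\<in>G. \<forall>s\<in>S. g s \<in> T"
    and BT: "\<forall>b\<in>B. \<forall>t\<in>T. b t \<in> T"
    and BS: "\<forall>b\<in>B. \<forall>s\<in>S. b s \<in> S"
    and f: "f \<in> gen_ideal scale B G"
  shows "\<And>s. s \<in> S \<Longrightarrow> f s \<in> T"
  using f
proof induction
  case (gen f) then show ?case using G by blast
next
  case zero then show ?case using T unfolding submod_def by simp
next
  case (add f g) then show ?case using T unfolding submod_def by simp
next
  case (smult f c) then show ?case using T unfolding submod_def by simp
next
  case (lmult b f) then show ?case using BT by auto
next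
  case (rmult b f) then show ?case using BS by auto
qed

lemma gen_alg_mono: assumes "G \<subseteq> H" shows "f \<in> gen_alg scale G \<Longrightarrow> f \<in> gen_alg scale H"
  by (induction rule: gen_alg.induct) (use assms in \<open>blast intro: gen_alg.intros\<close>)+

lemma gen_ideal_sub: assumes "G \<subseteq> gen_alg scale H" shows "f \<in> gen_ideal scale (gen_alg scale H) G \<Longrightarrow> f \<in> gen_alg scale H"
  by (induction rule: gen_ideal.induct) (use assms in \<open>blast intro: gen_alg.intros\<close>)+

locale lie_setup =
  fixes scale :: "'r::comm_ring_1 \<Rightarrow> 'q::ab_group_add \<Rightarrow> 'q" and br :: "'q \<Rightarrow> 'q \<Rightarrow> 'q" and L :: "'q set"
  assumes lie: "lie_algebra scale br" and sub: "lie_subalgebra scale br L" and sp: "semiprime scale br L"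
begin

lemma M: "module scale" using lie unfolding lie_algebra_def by blast
lemma addl: "br (x + y) z = br x z + br y z" using lie unfolding lie_algebra_def by blast
lemma addr: "br x (y + z) = br x y + br x z" using lie unfolding lie_algebra_def by blast
lemma scl: "br (scale c x) y = scale c (br x y)" using lie unfolding lie_algebra_def by blast
lemma scr: "br x (scale c y) = scale c (br x y)" using lie unfolding lie_algebra_def by blast
lemma alt: "br x x = 0" using lie unfolding lie_algebra_def by blast
lemma jac: "br x (br y z) + br y (br z x) + br z (br x y) = 0" using lie unfolding lie_algebra_def by blast

lemma br0l[simp]: "br 0 x = 0" using addl[of 0 0 x] by simp
lemma br0r[simp]: "br x 0 = 0" using addr[of x 0 0] by simp
lemma negl: "br (- x) y = - br x y" using addl[of x "-x" y] by (simp add: eq_neg_iff_add_eq_0 add.commute)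
lemma negr: "br x (- y) = - br x y" using addr[of x y "-y"] by (simp add: eq_neg_iff_add_eq_0 add.commute)
lemma anti: "br x y = - br y x"
proof -
  have "br x y + br y x = 0" using addl[of x y "x+y"] addr[of x x y] addr[of y x y] alt[of x] alt[of y] alt[of "x+y"] by simp
  thus ?thesis by (simp add: eq_neg_iff_add_eq_0)
qed
lemma deriv: "br q (br a b) = br (br q a) b + br a (br q b)"
proof -
  have "br q (br a b) + br a (br b q) + br b (br q a) = 0" by (rule jac)
  moreover have "br a (br b q) = - br a (br q b)" by (metis anti negr)
  moreover have "br b (br q a) = - br (br q a) b" by (metis anti)
  ultimately show ?thesis by (simp add: algebra_simps eq_neg_iff_add_eq_0)
qed

lemma sm_0: "submod scale S \<Longrightarrow> 0 \<in> S" unfolding submod_def by blast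
lemma sm_add: "submod scale S \<Longrightarrow> x \<in> S \<Longrightarrow> y \<in> S \<Longrightarrow> x + y \<in> S" unfolding submod_def by blast
lemma sm_sc: "submod scale S \<Longrightarrow> x \<in> S \<Longrightarrow> scale c x \<in> S" unfolding submod_def by blast
lemma sm_neg: "submod scale S \<Longrightarrow> x \<in> S \<Longrightarrow> - x \<in> S"
proof -
  assume "submod scale S" "x \<in> S"
  hence "scale (-1) x \<in> S" by (rule sm_sc)
  moreover have "scale (-1) x = - x" using M by (simp add: module.scale_minus_left module.scale_one)
  ultimately show ?thesis by simp
qed
lemma sm_diff: "submod scale S \<Longrightarrow> x \<in> S \<Longrightarrow> y \<in> S \<Longrightarrow> x - y \<in> S"
  using sm_add sm_neg by (metis diff_conv_add_uminus)

lemma L_sm: "submod scale L" using sub unfolding lie_subalgebra_def by blast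
lemma L_br: "x \<in> L \<Longrightarrow> y \<in> L \<Longrightarrow> br x y \<in> L" using sub unfolding lie_subalgebra_def by blast

lemma id_sub: "lie_ideal scale br L I \<Longrightarrow> I \<subseteq> L" unfolding lie_ideal_def by blast
lemma id_sm: "lie_ideal scale br L I \<Longrightarrow> submod scale I" unfolding lie_ideal_def by blast
lemma id_l: "lie_ideal scale br L I \<Longrightarrow> x \<in> L \<Longrightarrow> a \<in> I \<Longrightarrow> br x a \<in> I" unfolding lie_ideal_def by blast
lemma id_r: "lie_ideal scale br L I \<Longrightarrow> x \<in> L \<Longrightarrow> a \<in> I \<Longrightarrow> br a x \<in> I"
  by (metis anti id_l id_sm sm_neg)

definition ess where "ess I \<longleftrightarrow> lie_ideal scale br L I \<and> Ann br L I = {0}"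

lemma ess_zero: "ess I \<Longrightarrow> a \<in> L \<Longrightarrow> (\<And>x. x \<in> I \<Longrightarrow> br a x = 0) \<Longrightarrow> a = 0"
  unfolding ess_def Ann_def by blast

lemma essI: "lie_ideal scale br L I \<Longrightarrow> (\<And>a. a \<in> L \<Longrightarrow> (\<And>x. x \<in> I \<Longrightarrow> br a x = 0) \<Longrightarrow> a = 0) \<Longrightarrow> ess I"
  unfolding ess_def Ann_def using id_sm sm_0 sub L_sm by (auto intro: sm_0)

lemma abel: "lie_ideal scale br L N \<Longrightarrow> (\<And>a b. a \<in> N \<Longrightarrow> b \<in> N \<Longrightarrow> br a b = 0) \<Longrightarrow> N = {0}"
  using sp unfolding semiprime_def by blast

lemma ann_ideal: "lie_ideal scale br L I \<Longrightarrow> lie_ideal scale br L (Ann br L I)"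
proof -
  assume I: "lie_ideal scale br L I"
  show ?thesis unfolding lie_ideal_def submod_def
  proof (intro conjI ballI allI)
    show "Ann br L I \<subseteq> L" unfolding Ann_def by blast
    show "0 \<in> Ann br L I" unfolding Ann_def using sm_0[OF L_sm] by simp
    fix x y assume "x \<in> Ann br L I" "y \<in> Ann br L I"
    thus "x + y \<in> Ann br L I" unfolding Ann_def using sm_add[OF L_sm] by (simp add: addl)
  next
    fix c x assume "x \<in> Ann br L I"
    thus "scale c x \<in> Ann br L I" unfolding Ann_def using sm_sc[OF L_sm] M by (simp add: scl module.scale_zero_right)
  next
    fix y a assume y: "y \<in> L" and a: "a \<in> Ann br L I"
    have "br (br y a) x = 0" if x: "x \<in> I" for x
    proof -
      have "br y (br a x) = br (br y a) x + br a (br y x)" by (rule deriv)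
      moreover have "br a x = 0" using a x unfolding Ann_def by blast
      moreover have "br a (br y x) = 0" using a id_l[OF I y x] unfolding Ann_def by blast
      ultimately show ?thesis by simp
    qed
    thus "br y a \<in> Ann br L I" using a y L_br unfolding Ann_def by blast
  qed
qed

lemma int_ideal: "lie_ideal scale br L I \<Longrightarrow> lie_ideal scale br L J \<Longrightarrow> lie_ideal scale br L (I \<inter> J)"
  unfolding lie_ideal_def submod_def by blast

lemma ess_L: "ess L"
proof -
  have LI: "lie_ideal scale br L L" unfolding lie_ideal_def using L_sm L_br by blast
  have "Ann br L L = {0}"
    by (rule abel[OF ann_ideal[OF LI]]) (auto simp: Ann_def)
  thus ?thesis using LI unfolding ess_def by blast
qed

lemma ess_int: assumes I: "ess I" and J: "ess J" shows "ess (I \<inter> J)"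
proof -
  have Ii: "lie_ideal scale br L I" and Ji: "lie_ideal scale br L J" using I J unfolding ess_def by auto
  have IJ: "lie_ideal scale br L (I \<inter> J)" by (rule int_ideal[OF Ii Ji])
  define K where "K = Ann br L (I \<inter> J)"
  have Ki: "lie_ideal scale br L K" unfolding K_def by (rule ann_ideal[OF IJ])
  have Mi: "lie_ideal scale br L (K \<inter> (I \<inter> J))" by (rule int_ideal[OF Ki IJ])
  have M0: "K \<inter> (I \<inter> J) = {0}"
    by (rule abel[OF Mi]) (auto simp: K_def Ann_def)
  show ?thesis
  proof (rule essI[OF IJ])
    fix k assume kL: "k \<in> L" and kz: "\<And>x. x \<in> I \<inter> J \<Longrightarrow> br k x = 0"
    have kK: "k \<in> K" unfolding K_def Ann_def using kL kz by blast
    show "k = 0"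
    proof (rule ess_zero[OF I kL])
      fix x assume x: "x \<in> I"
      have xL: "x \<in> L" using x id_sub[OF Ii] by blast
      define w where "w = br k x"
      have wK: "w \<in> K" unfolding w_def using id_r[OF Ki xL kK] .
      have wI: "w \<in> I" unfolding w_def using id_l[OF Ii kL x] .
      have wL: "w \<in> L" using wI id_sub[OF Ii] by blast
      show "br k x = 0" unfolding w_def[symmetric]
      proof (rule ess_zero[OF J wL])
        fix y assume y: "y \<in> J"
        have yL: "y \<in> L" using y id_sub[OF Ji] by blast
        have "br w y \<in> K" using id_r[OF Ki yL wK] .
        moreover have "br w y \<in> I" using id_r[OF Ii yL wI] .
        moreover have "br w y \<in> J" using id_l[OF Ji wL y] .
        ultimately show "br w y = 0" using M0 by blast
      qed
    qed
  qed
qed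

lemma brspan_sub: assumes K: "lie_ideal scale br L K" shows "x \<in> brspan scale br K \<Longrightarrow> x \<in> K"
proof (induction rule: brspan.induct)
  case (gen a b) then show ?case using id_l[OF K] id_sub[OF K] by blast
next
  case zero then show ?case using sm_0[OF id_sm[OF K]] .
next
  case (add x y) then show ?case using sm_add[OF id_sm[OF K]] by blast
next
  case (smult x c) then show ?case using sm_sc[OF id_sm[OF K]] by blast
qed

lemma brspan_ideal: assumes K: "lie_ideal scale br L K" shows "lie_ideal scale br L (brspan scale br K)"
  unfolding lie_ideal_def
proof (intro conjI)
  show "brspan scale br K \<subseteq> L" using brspan_sub[OF K] id_sub[OF K] by blast
  show "submod scale (brspan scale br K)" unfolding submod_def by (auto intro: brspan.intros)
  have "y \<in> L \<Longrightarrow> br y a \<in> brspan scale br K" if "a \<in> brspan scale br K" for y a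
    using that
  proof (induction rule: brspan.induct)
    case (gen a b)
    have "br y (br a b) = br (br y a) b + br a (br y b)" by (rule deriv)
    moreover have "br (br y a) b \<in> brspan scale br K" using gen id_l[OF K] by (blast intro: brspan.gen)
    moreover have "br a (br y b) \<in> brspan scale br K" using gen id_l[OF K] by (blast intro: brspan.gen)
    ultimately show ?case by (simp add: brspan.add)
  next
    case zero then show ?case by (simp add: brspan.zero)
  next
    case (add x z) then show ?case by (simp add: addr brspan.add)
  next
    case (smult x c) then show ?case by (simp add: scr brspan.smult)
  qed
  thus "\<forall>x\<in>L. \<forall>a\<in>brspan scale br K. br x a \<in> brspan scale br K" by blast
qed

lemma ann_span: assumes "a \<in> L" "\<And>k1 k2. k1 \<in> K \<Longrightarrow> k2 \<in> K \<Longrightarrow> br a (br k1 k2) = 0"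
  shows "x \<in> brspan scale br K \<Longrightarrow> br a x = 0"
  by (induction rule: brspan.induct) (use assms in \<open>auto simp: addr scr M module.scale_zero_right\<close>)

lemma ess_brspan: assumes K: "ess K" shows "ess (brspan scale br K)"
proof -
  have Ki: "lie_ideal scale br L K" using K unfolding ess_def by blast
  have Bi: "lie_ideal scale br L (brspan scale br K)" by (rule brspan_ideal[OF Ki])
  define A where "A = Ann br L (brspan scale br K)"
  have Ai: "lie_ideal scale br L A" unfolding A_def by (rule ann_ideal[OF Bi])
  define N where "N = A \<inter> K"
  have Ni: "lie_ideal scale br L N" unfolding N_def by (rule int_ideal[OF Ai Ki])
  define N' where "N' = N \<inter> Ann br L N"
  have N'i: "lie_ideal scale br L N'" unfolding N'_def by (rule int_ideal[OF Ni ann_ideal[OF Ni]])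
  have N'0: "N' = {0}" by (rule abel[OF N'i]) (auto simp: N'_def Ann_def)
  have N0: "N = {0}"
  proof (rule abel[OF Ni])
    fix n1 n2 assume n1: "n1 \<in> N" and n2: "n2 \<in> N"
    have n2L: "n2 \<in> L" using n2 id_sub[OF Ni] by blast
    have bN: "br n1 n2 \<in> N" using id_r[OF Ni n2L n1] .
    have bL: "br n1 n2 \<in> L" using bN id_sub[OF Ni] by blast
    have "br (br n1 n2) n3 = 0" if n3: "n3 \<in> N" for n3
    proof -
      have "br n1 n2 \<in> brspan scale br K" using n1 n2 unfolding N_def by (blast intro: brspan.gen)
      hence "br n3 (br n1 n2) = 0" using n3 unfolding N_def A_def Ann_def by blast
      thus ?thesis by (metis anti neg_equal_0_iff_equal)
    qed
    hence "br n1 n2 \<in> N'" unfolding N'_def Ann_def using bN bL by blast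
    thus "br n1 n2 = 0" using N'0 by blast
  qed
  show ?thesis
  proof (rule essI[OF Bi])
    fix a assume aL: "a \<in> L" and az: "\<And>x. x \<in> brspan scale br K \<Longrightarrow> br a x = 0"
    have aA: "a \<in> A" unfolding A_def Ann_def using aL az by blast
    show "a = 0"
    proof (rule ess_zero[OF K aL])
      fix k assume k: "k \<in> K"
      have kL: "k \<in> L" using k id_sub[OF Ki] by blast
      have "br a k \<in> A" using id_r[OF Ai kL aA] .
      moreover have "br a k \<in> K" using id_l[OF Ki aL k] .
      ultimately show "br a k = 0" using N0 unfolding N_def by blast
    qed
  qed
qed

lemma ess_ideal: "ess I \<Longrightarrow> lie_ideal scale br L I" unfolding ess_def by blast
lemma ess_subL: "ess I \<Longrightarrow> x \<in> I \<Longrightarrow> x \<in> L" using id_sub ess_ideal by blast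

lemma neg_in: "x \<in> L \<Longrightarrow> - x \<in> L" using sm_neg[OF L_sm] .
lemma anti_in: "br x y \<in> L \<Longrightarrow> br y x \<in> L" by (metis anti neg_in)

context assumes aoq: "algebra_of_quotients scale br L"
begin

lemma annQ: assumes I: "ess I" and p: "p \<noteq> 0" shows "\<exists>x\<in>I. br x p \<noteq> 0"
proof (rule ccontr)
  assume "\<not> ?thesis"
  hence H: "\<And>x. x \<in> I \<Longrightarrow> br x p = 0" by blast
  obtain J where Ji: "lie_ideal scale br L J" and ex: "\<exists>j\<in>J. br j p \<noteq> 0" and inL: "\<forall>j\<in>J. br j p \<in> L"
    using aoq p unfolding algebra_of_quotients_def by blast
  obtain j where j: "j \<in> J" and jp: "br j p \<noteq> 0" using ex by blast
  have jL: "j \<in> L" using j id_sub[OF Ji] by blast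
  have "br j p = 0"
  proof (rule ess_zero[OF I])
    show "br j p \<in> L" using inL j by blast
    fix x assume x: "x \<in> I"
    have "br x (br j p) = br (br x j) p + br j (br x p)" by (rule deriv)
    moreover have "br x j \<in> I" using id_r[OF ess_ideal[OF I] jL x] .
    ultimately have "br x (br j p) = 0" using H x by simp
    thus "br (br j p) x = 0" by (metis anti neg_equal_0_iff_equal)
  qed
  thus False using jp by blast
qed

lemma den: "\<exists>I0. ess I0 \<and> (\<forall>x\<in>I0. br x q \<in> L)"
proof (cases "q = 0")
  case True then show ?thesis using ess_L sm_0[OF L_sm] by auto
next
  case False
  then obtain J where Ji: "lie_ideal scale br L J" and A: "Ann br L J = {0}" and inL: "\<forall>j\<in>J. br j q \<in> L"
    using aoq unfolding algebra_of_quotients_def by blast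
  thus ?thesis unfolding ess_def by blast
qed

lemma dprop: assumes I: "ess I" and q: "q \<noteq> 0" shows "\<exists>x\<in>I. \<exists>l\<in>L. br q (br x l) \<noteq> 0"
proof (rule ccontr)
  assume "\<not> ?thesis"
  hence H: "\<And>x l. x \<in> I \<Longrightarrow> l \<in> L \<Longrightarrow> br q (br x l) = 0" by blast
  obtain J where Ji: "lie_ideal scale br L J" and A: "Ann br L J = {0}" and inL: "\<forall>j\<in>J. br j q \<in> L"
    using aoq q unfolding algebra_of_quotients_def by blast
  have J: "ess J" using Ji A unfolding ess_def by blast
  have K: "ess (I \<inter> J)" by (rule ess_int[OF I J])
  obtain x where x: "x \<in> I \<inter> J" and xq: "br x q \<noteq> 0" using annQ[OF K q] by blast
  have xL: "x \<in> L" using x ess_subL[OF I] by blast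
  have pL: "br q x \<in> L" using inL x anti_in by blast
  have "br q x = 0"
  proof (rule ess_zero[OF ess_brspan[OF K] pL])
    fix y assume y: "y \<in> brspan scale br (I \<inter> J)"
    show "br (br q x) y = 0"
    proof (rule ann_span[OF pL _ y])
      fix k1 k2 assume k1: "k1 \<in> I \<inter> J" and k2: "k2 \<in> I \<inter> J"
      have k1L: "k1 \<in> L" and k2L: "k2 \<in> L" using k1 k2 ess_subL[OF I] by auto
      have wL: "br k1 k2 \<in> L" using L_br[OF k1L k2L] .
      have "br q (br x (br k1 k2)) = br (br q x) (br k1 k2) + br x (br q (br k1 k2))" by (rule deriv)
      moreover have "br q (br x (br k1 k2)) = 0" using H x wL by blast
      moreover have "br q (br k1 k2) = 0" using H k1 k2L by blast
      ultimately show "br (br q x) (br k1 k2) = 0" by simp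
    qed
  qed
  hence "br x q = 0" by (metis anti neg_equal_0_iff_equal)
  thus False using xq by blast
qed

lemma base: assumes J: "ess J"
  shows "\<exists>I. ess I \<and> (\<forall>x\<in>I. br q x \<in> J) \<and> (\<forall>z\<in>Dset br L J. br q z \<in> Dset br L I)"
proof -
  obtain I0 where I0: "ess I0" and I0q: "\<forall>x\<in>I0. br x q \<in> L" using den by blast
  define K where "K = J \<inter> I0"
  have K: "ess K" unfolding K_def by (rule ess_int[OF J I0])
  have Ki: "lie_ideal scale br L K" using ess_ideal[OF K] .
  have Ji: "lie_ideal scale br L J" using ess_ideal[OF J] .
  define I where "I = brspan scale br K"
  have I: "ess I" unfolding I_def by (rule ess_brspan[OF K])
  have P1: "x \<in> I \<Longrightarrow> br q x \<in> J" for x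
    unfolding I_def
  proof (induction rule: brspan.induct)
    case (gen a b)
    have aJ: "a \<in> J" and bJ: "b \<in> J" and aL: "a \<in> L" and bL: "b \<in> L"
      using gen K_def ess_subL[OF J] by auto
    have qa: "br q a \<in> L" using I0q gen K_def anti_in by blast
    have qb: "br q b \<in> L" using I0q gen K_def anti_in by blast
    have "br q (br a b) = br (br q a) b + br a (br q b)" by (rule deriv)
    moreover have "br (br q a) b \<in> J" using id_l[OF Ji qa bJ] .
    moreover have "br a (br q b) \<in> J" using id_r[OF Ji qb aJ] .
    ultimately show ?case using sm_add[OF id_sm[OF Ji]] by simp
  next
    case zero then show ?case using sm_0[OF id_sm[OF Ji]] by simp
  next
    case (add x y) then show ?case using sm_add[OF id_sm[OF Ji]] by (simp add: addr)
  next
    case (smult x c) then show ?case using sm_sc[OF id_sm[OF Ji]] by (simp add: scr)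
  qed
  have P2: "x \<in> I \<Longrightarrow> br x z \<in> K" if z: "z \<in> Dset br L J" for x z
    unfolding I_def
  proof (induction rule: brspan.induct)
    case (gen a b)
    have za: "br z a \<in> L" using z gen K_def anti_in unfolding Dset_def by blast
    have zb: "br z b \<in> L" using z gen K_def anti_in unfolding Dset_def by blast
    have "br z (br a b) = br (br z a) b + br a (br z b)" by (rule deriv)
    moreover have "br (br z a) b \<in> K" using id_l[OF Ki za gen(2)] .
    moreover have "br a (br z b) \<in> K" using id_r[OF Ki zb gen(1)] .
    ultimately have "br z (br a b) \<in> K" using sm_add[OF id_sm[OF Ki]] by simp
    thus ?case using sm_neg[OF id_sm[OF Ki]] anti by metis
  next
    case zero then show ?case using sm_0[OF id_sm[OF Ki]] by simp
  next
    case (add x y) then show ?case using sm_add[OF id_sm[OF Ki]] by (simp add: addl)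
  next
    case (smult x c) then show ?case using sm_sc[OF id_sm[OF Ki]] by (simp add: scl)
  qed
  have P3: "br q z \<in> Dset br L I" if z: "z \<in> Dset br L J" for z
    unfolding Dset_def
  proof (intro CollectI ballI)
    fix x assume x: "x \<in> I"
    have "br x (br q z) = br (br x q) z + br q (br x z)" by (rule deriv)
    moreover have "br (br x q) z \<in> L"
    proof -
      have "br x q \<in> J" using P1[OF x] sm_neg[OF id_sm[OF Ji]] anti by metis
      thus ?thesis using z unfolding Dset_def by blast
    qed
    moreover have "br q (br x z) \<in> L"
      using P2[OF z x] I0q K_def anti_in by blast
    ultimately show "br x (br q z) \<in> L" using sm_add[OF L_sm] by simp
  qed
  show ?thesis using I P1 P3 by blast
qed

end


lemma Dset_sm: "submod scale (Dset br L I)"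
  unfolding submod_def Dset_def
  using sm_0[OF L_sm] sm_add[OF L_sm] sm_sc[OF L_sm] by (auto simp: addr scr)

lemma Dset_anti: "I \<subseteq> I' \<Longrightarrow> Dset br L I' \<subseteq> Dset br L I" unfolding Dset_def by blast

lemma L_Dset: "L \<subseteq> Dset br L L" unfolding Dset_def using L_br by blast

lemma AQL_maps: assumes S: "submod scale S" and G: "\<And>y s. y \<in> L \<Longrightarrow> s \<in> S \<Longrightarrow> br y s \<in> S"
  and g: "g \<in> AQL scale br L" and s: "s \<in> S" shows "g s \<in> S"
  using gen_alg_maps[OF S _ g[unfolded AQL_def] s] G unfolding ad_def by blast

lemma AQL_L: "g \<in> AQL scale br L \<Longrightarrow> s \<in> L \<Longrightarrow> g s \<in> L"
  using AQL_maps[OF L_sm L_br] by blast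
lemma AQL_I: "lie_ideal scale br L I \<Longrightarrow> g \<in> AQL scale br L \<Longrightarrow> s \<in> I \<Longrightarrow> g s \<in> I"
  using AQL_maps[OF id_sm] id_l by blast
lemma AQL_D: assumes I: "lie_ideal scale br L I" and g: "g \<in> AQL scale br L" and s: "s \<in> Dset br L I"
  shows "g s \<in> Dset br L I"
proof -
  have step: "br y z \<in> Dset br L I" if y: "y \<in> L" and z: "z \<in> Dset br L I" for y z
    unfolding Dset_def
  proof (intro CollectI ballI)
    fix x assume x: "x \<in> I"
    have "br x (br y z) = br (br x y) z + br y (br x z)" by (rule deriv)
    moreover have "br (br x y) z \<in> L" using z id_r[OF I y x] unfolding Dset_def by blast
    moreover have "br y (br x z) \<in> L" using z x y L_br unfolding Dset_def by blast
    ultimately show "br x (br y z) \<in> L" using sm_add[OF L_sm] by simp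
  qed
  show ?thesis by (rule AQL_maps[OF Dset_sm step g s])
qed

lemma AQL_lin: assumes g: "g \<in> AQL scale br L"
  shows "g (x + y) = g x + g y" "g (scale c x) = scale c (g x)" "g 0 = 0"
proof -
  have H: "(\<forall>x y. g (x + y) = g x + g y) \<and> (\<forall>c x. g (scale c x) = scale c (g x))"
    by (rule gen_alg_lin[OF _ _ M g[unfolded AQL_def]]) (auto simp: ad_def addr scr)
  thus "g (x + y) = g x + g y" "g (scale c x) = scale c (g x)" by auto
  have "g (0 + 0) = g 0 + g 0" using H by blast
  thus "g 0 = 0" by simp
qed

lemma It_LI: assumes I: "lie_ideal scale br L I" and a: "a \<in> Itilde scale br L I" and l: "l \<in> L"
  shows "a l \<in> I"
proof -
  have G: "\<forall>g\<in>{ad br x |x. x \<in> I}. \<forall>s\<in>L. g s \<in> I"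
    using id_r[OF I] unfolding ad_def by blast
  have BT: "\<forall>b\<in>AQL scale br L. \<forall>t\<in>I. b t \<in> I" using AQL_I[OF I] by blast
  have BS: "\<forall>b\<in>AQL scale br L. \<forall>t\<in>L. b t \<in> L" using AQL_L by blast
  show ?thesis by (rule gen_ideal_maps[OF id_sm[OF I] G BT BS a[unfolded Itilde_def] l])
qed

lemma It_DL: assumes I: "lie_ideal scale br L I" and a: "a \<in> Itilde scale br L I" and z: "z \<in> Dset br L I"
  shows "a z \<in> L"
proof -
  have G: "\<forall>g\<in>{ad br x |x. x \<in> I}. \<forall>s\<in>Dset br L I. g s \<in> L"
    unfolding ad_def Dset_def by blast
  have BT: "\<forall>b\<in>AQL scale br L. \<forall>t\<in>L. b t \<in> L" using AQL_L by blast
  have BS: "\<forall>b\<in>AQL scale br L. \<forall>t\<in>Dset br L I. b t \<in> Dset br L I" using AQL_D[OF I] by blast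
  show ?thesis by (rule gen_ideal_maps[OF L_sm G BT BS a[unfolded Itilde_def] z])
qed

lemma It_AQ: assumes I: "lie_ideal scale br L I" shows "a \<in> Itilde scale br L I \<Longrightarrow> a \<in> AQ scale br"
proof -
  assume a: "a \<in> Itilde scale br L I"
  have sub: "{ad br x |x. x \<in> I} \<subseteq> gen_alg scale {ad br x |x. x \<in> L}"
    using id_sub[OF I] by (auto intro: gen_alg.gen)
  have "a \<in> AQL scale br L" using gen_ideal_sub[OF sub] a unfolding Itilde_def AQL_def by blast
  moreover have "{ad br x |x. x \<in> L} \<subseteq> {ad br x |x. True}" by blast
  ultimately show ?thesis unfolding AQL_def AQ_def using gen_alg_mono by blast
qed

lemma ST: assumes aoq: "algebra_of_quotients scale br L" and mu: "\<mu> \<in> AQ scale br"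
  shows "(\<forall>J. ess J \<longrightarrow> (\<exists>I. ess I \<and> (\<forall>x\<in>I. \<mu> x \<in> J))) \<and>
         (\<forall>J. ess J \<longrightarrow> (\<exists>I. ess I \<and> (\<forall>z\<in>Dset br L J. \<mu> z \<in> Dset br L I)))"
  using mu unfolding AQ_def
proof induction
  case (gen f)
  then obtain q where f: "f = ad br q" by blast
  show ?case
  proof (intro conjI allI impI)
    fix J assume J: "ess J"
    obtain I where "ess I" "\<forall>x\<in>I. br q x \<in> J" using base[OF aoq J] by blast
    thus "\<exists>I. ess I \<and> (\<forall>x\<in>I. f x \<in> J)" unfolding f ad_def by blast
  next
    fix J assume J: "ess J"
    obtain I where "ess I" "\<forall>z\<in>Dset br L J. br q z \<in> Dset br L I" using base[OF aoq J] by blast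
    thus "\<exists>I. ess I \<and> (\<forall>z\<in>Dset br L J. f z \<in> Dset br L I)" unfolding f ad_def by blast
  qed
next
  case zero
  show ?case
  proof (intro conjI allI impI)
    fix J assume J: "ess J"
    have "\<forall>x\<in>J. (0::'q) \<in> J" using sm_0[OF id_sm[OF ess_ideal[OF J]]] by blast
    thus "\<exists>I. ess I \<and> (\<forall>x\<in>I. (0::'q) \<in> J)" using J by blast
  next
    fix J assume J: "ess J"
    have "\<forall>z\<in>Dset br L J. (0::'q) \<in> Dset br L J" using sm_0[OF Dset_sm] by blast
    thus "\<exists>I. ess I \<and> (\<forall>z\<in>Dset br L J. (0::'q) \<in> Dset br L I)" using J by blast
  qed
next
  case (add f g)
  have f1: "\<And>J. ess J \<Longrightarrow> \<exists>I. ess I \<and> (\<forall>x\<in>I. f x \<in> J)"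
   and f2: "\<And>J. ess J \<Longrightarrow> \<exists>I. ess I \<and> (\<forall>z\<in>Dset br L J. f z \<in> Dset br L I)"
   and g1: "\<And>J. ess J \<Longrightarrow> \<exists>I. ess I \<and> (\<forall>x\<in>I. g x \<in> J)"
   and g2: "\<And>J. ess J \<Longrightarrow> \<exists>I. ess I \<and> (\<forall>z\<in>Dset br L J. g z \<in> Dset br L I)"
    using add.IH by simp_all
  show ?case
  proof (intro conjI allI impI)
    fix J assume J: "ess J"
    obtain I1 where 1: "ess I1" "\<forall>x\<in>I1. f x \<in> J" using f1[OF J] by blast
    obtain I2 where 2: "ess I2" "\<forall>x\<in>I2. g x \<in> J" using g1[OF J] by blast
    have "\<forall>x\<in>I1 \<inter> I2. f x + g x \<in> J" using 1 2 sm_add[OF id_sm[OF ess_ideal[OF J]]] by blast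
    thus "\<exists>I. ess I \<and> (\<forall>x\<in>I. f x + g x \<in> J)" using ess_int[OF 1(1) 2(1)] by blast
  next
    fix J assume J: "ess J"
    obtain I1 where 1: "ess I1" "\<forall>z\<in>Dset br L J. f z \<in> Dset br L I1" using f2[OF J] by blast
    obtain I2 where 2: "ess I2" "\<forall>z\<in>Dset br L J. g z \<in> Dset br L I2" using g2[OF J] by blast
    have s1: "Dset br L I1 \<subseteq> Dset br L (I1 \<inter> I2)" "Dset br L I2 \<subseteq> Dset br L (I1 \<inter> I2)"
      by (auto intro!: Dset_anti)
    have "\<forall>z\<in>Dset br L J. f z + g z \<in> Dset br L (I1 \<inter> I2)"
    proof
      fix z assume z: "z \<in> Dset br L J"
      have "f z \<in> Dset br L (I1 \<inter> I2)" using 1(2) z s1(1) by blast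
      moreover have "g z \<in> Dset br L (I1 \<inter> I2)" using 2(2) z s1(2) by blast
      ultimately show "f z + g z \<in> Dset br L (I1 \<inter> I2)" by (rule sm_add[OF Dset_sm])
    qed
    thus "\<exists>I. ess I \<and> (\<forall>z\<in>Dset br L J. f z + g z \<in> Dset br L I)" using ess_int[OF 1(1) 2(1)] by blast
  qed
next
  case (smult f c)
  have f1: "\<And>J. ess J \<Longrightarrow> \<exists>I. ess I \<and> (\<forall>x\<in>I. f x \<in> J)"
   and f2: "\<And>J. ess J \<Longrightarrow> \<exists>I. ess I \<and> (\<forall>z\<in>Dset br L J. f z \<in> Dset br L I)"
    using smult.IH by simp_all
  show ?case
  proof (intro conjI allI impI)
    fix J assume J: "ess J"
    obtain I1 where 1: "ess I1" "\<forall>x\<in>I1. f x \<in> J" using f1[OF J] by blast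
    have "\<forall>x\<in>I1. scale c (f x) \<in> J" using 1(2) sm_sc[OF id_sm[OF ess_ideal[OF J]]] by blast
    thus "\<exists>I. ess I \<and> (\<forall>x\<in>I. scale c (f x) \<in> J)" using 1(1) by blast
  next
    fix J assume J: "ess J"
    obtain I1 where 1: "ess I1" "\<forall>z\<in>Dset br L J. f z \<in> Dset br L I1" using f2[OF J] by blast
    have "\<forall>z\<in>Dset br L J. scale c (f z) \<in> Dset br L I1" using 1(2) sm_sc[OF Dset_sm] by blast
    thus "\<exists>I. ess I \<and> (\<forall>z\<in>Dset br L J. scale c (f z) \<in> Dset br L I)" using 1(1) by blast
  qed
next
  case (comp f g)
  have f1: "\<And>J. ess J \<Longrightarrow> \<exists>I. ess I \<and> (\<forall>x\<in>I. f x \<in> J)"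
   and f2: "\<And>J. ess J \<Longrightarrow> \<exists>I. ess I \<and> (\<forall>z\<in>Dset br L J. f z \<in> Dset br L I)"
   and g1: "\<And>J. ess J \<Longrightarrow> \<exists>I. ess I \<and> (\<forall>x\<in>I. g x \<in> J)"
   and g2: "\<And>J. ess J \<Longrightarrow> \<exists>I. ess I \<and> (\<forall>z\<in>Dset br L J. g z \<in> Dset br L I)"
    using comp.IH by simp_all
  show ?case
  proof (intro conjI allI impI)
    fix J assume J: "ess J"
    obtain I1 where 1: "ess I1" "\<forall>x\<in>I1. f x \<in> J" using f1[OF J] by blast
    obtain I2 where 2: "ess I2" "\<forall>x\<in>I2. g x \<in> I1" using g1[OF 1(1)] by blast
    have "\<forall>x\<in>I2. (f \<circ> g) x \<in> J" using 1(2) 2(2) by simp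
    thus "\<exists>I. ess I \<and> (\<forall>x\<in>I. (f \<circ> g) x \<in> J)" using 2(1) by blast
  next
    fix J assume J: "ess J"
    obtain I1 where 1: "ess I1" "\<forall>z\<in>Dset br L J. g z \<in> Dset br L I1" using g2[OF J] by blast
    obtain I2 where 2: "ess I2" "\<forall>z\<in>Dset br L I1. f z \<in> Dset br L I2" using f2[OF 1(1)] by blast
    have "\<forall>z\<in>Dset br L J. (f \<circ> g) z \<in> Dset br L I2" using 1(2) 2(2) by simp
    thus "\<exists>I. ess I \<and> (\<forall>z\<in>Dset br L J. (f \<circ> g) z \<in> Dset br L I)" using 2(1) by blast
  qed
qed

end

theorem mainTheorem1:
  fixes scale :: "'r::comm_ring_1 \<Rightarrow> 'q::ab_group_add \<Rightarrow> 'q"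
    and br :: "'q \<Rightarrow> 'q \<Rightarrow> 'q"
    and L :: "'q set"
  assumes "lie_algebra scale br"
    and "lie_subalgebra scale br L"
    and "semiprime scale br L"
  shows "algebra_of_quotients scale br L \<longleftrightarrow>
    (center br UNIV = {0} \<and>
     (\<forall>\<mu> \<in> AQ scale br. \<mu> \<noteq> (\<lambda>_. 0) \<longrightarrow>
        (\<exists>I. lie_ideal scale br L I \<and> Ann br L I = {0}
           \<and> (\<forall>\<alpha> \<in> Itilde scale br L I. \<mu> \<circ> \<alpha> \<in> A0 scale br L)
           \<and> (\<forall>\<alpha> \<in> Itilde scale br L I. \<alpha> \<circ> \<mu> \<in> A0 scale br L)
           \<and> (\<exists>\<alpha> \<in> Itilde scale br L I. \<alpha> \<circ> \<mu> \<noteq> (\<lambda>_. 0))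
           \<and> ((\<exists>q. \<mu> = ad br q) \<longrightarrow>
                (\<exists>\<alpha> \<in> Itilde scale br L I. \<exists>x \<in> L. \<mu> (\<alpha> x) \<noteq> 0)))))"
proof -
  interpret lie_setup scale br L using assms by unfold_locales
  show ?thesis
  proof
    assume aoq: "algebra_of_quotients scale br L"
    have cen: "center br UNIV = {0}"
    proof -
      have "a = 0" if a: "a \<in> center br UNIV" for a
      proof (rule ccontr)
        assume "a \<noteq> 0"
        then obtain x where "x \<in> L" "br x a \<noteq> 0" using annQ[OF aoq ess_L] by blast
        moreover have "br a x = 0" using a unfolding center_def Ann_def by blast
        ultimately show False by (metis anti neg_equal_0_iff_equal)
      qed
      moreover have "(0::'q) \<in> center br UNIV" unfolding center_def Ann_def by simp
      ultimately show ?thesis by blast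
    qed
    have main: "\<exists>I. lie_ideal scale br L I \<and> Ann br L I = {0}
           \<and> (\<forall>\<alpha> \<in> Itilde scale br L I. \<mu> \<circ> \<alpha> \<in> A0 scale br L)
           \<and> (\<forall>\<alpha> \<in> Itilde scale br L I. \<alpha> \<circ> \<mu> \<in> A0 scale br L)
           \<and> (\<exists>\<alpha> \<in> Itilde scale br L I. \<alpha> \<circ> \<mu> \<noteq> (\<lambda>_. 0))
           \<and> ((\<exists>q. \<mu> = ad br q) \<longrightarrow>
                (\<exists>\<alpha> \<in> Itilde scale br L I. \<exists>x \<in> L. \<mu> (\<alpha> x) \<noteq> 0))"
      if mu: "\<mu> \<in> AQ scale br" and mu0: "\<mu> \<noteq> (\<lambda>_. 0)" for \<mu>
    proof -
      have st: "(\<forall>J. ess J \<longrightarrow> (\<exists>I. ess I \<and> (\<forall>x\<in>I. \<mu> x \<in> J))) \<and>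
         (\<forall>J. ess J \<longrightarrow> (\<exists>I. ess I \<and> (\<forall>z\<in>Dset br L J. \<mu> z \<in> Dset br L I)))"
        by (rule ST[OF aoq mu])
      obtain I1 where 1: "ess I1" "\<forall>x\<in>I1. \<mu> x \<in> L" using st ess_L by blast
      obtain I2 where 2: "ess I2" "\<forall>z\<in>Dset br L L. \<mu> z \<in> Dset br L I2" using st ess_L by blast
      define I where "I = I1 \<inter> I2"
      have I: "ess I" unfolding I_def by (rule ess_int[OF 1(1) 2(1)])
      have Ii: "lie_ideal scale br L I" using ess_ideal[OF I] .
      have c1: "\<mu> \<circ> \<alpha> \<in> A0 scale br L" if a: "\<alpha> \<in> Itilde scale br L I" for \<alpha>
      proof -
        have "\<mu> \<circ> \<alpha> \<in> AQ scale br" using mu It_AQ[OF Ii a] unfolding AQ_def by (rule gen_alg.comp)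
        moreover have "(\<mu> \<circ> \<alpha>) ` L \<subseteq> L"
        proof
          fix y assume "y \<in> (\<mu> \<circ> \<alpha>) ` L"
          then obtain l where l: "l \<in> L" "y = \<mu> (\<alpha> l)" by auto
          have "\<alpha> l \<in> I" by (rule It_LI[OF Ii a l(1)])
          thus "y \<in> L" using 1(2) l(2) unfolding I_def by blast
        qed
        ultimately show ?thesis unfolding A0_def by blast
      qed
      have c2: "\<alpha> \<circ> \<mu> \<in> A0 scale br L" if a: "\<alpha> \<in> Itilde scale br L I" for \<alpha>
      proof -
        have "\<alpha> \<circ> \<mu> \<in> AQ scale br" using It_AQ[OF Ii a] mu unfolding AQ_def by (rule gen_alg.comp)
        moreover have "(\<alpha> \<circ> \<mu>) ` L \<subseteq> L"
        proof
          fix y assume "y \<in> (\<alpha> \<circ> \<mu>) ` L"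
          then obtain l where l: "l \<in> L" "y = \<alpha> (\<mu> l)" by auto
          have "\<mu> l \<in> Dset br L I2" using 2(2) l(1) L_Dset by blast
          hence "\<mu> l \<in> Dset br L I" using Dset_anti[of I I2] unfolding I_def by blast
          thus "y \<in> L" using It_DL[OF Ii a] l(2) by blast
        qed
        ultimately show ?thesis unfolding A0_def by blast
      qed
      have c3: "\<exists>\<alpha> \<in> Itilde scale br L I. \<alpha> \<circ> \<mu> \<noteq> (\<lambda>_. 0)"
      proof -
        obtain z where z: "\<mu> z \<noteq> 0" using mu0 by blast
        obtain x where x: "x \<in> I" "br x (\<mu> z) \<noteq> 0" using annQ[OF aoq I z] by blast
        have "ad br x \<in> Itilde scale br L I" unfolding Itilde_def using x(1) by (blast intro: gen_ideal.gen)
        moreover have "(ad br x \<circ> \<mu>) z \<noteq> 0" using x(2) by (simp add: ad_def)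
        ultimately show ?thesis by (metis)
      qed
      have c4: "\<exists>\<alpha> \<in> Itilde scale br L I. \<exists>x \<in> L. \<mu> (\<alpha> x) \<noteq> 0" if exq: "\<exists>q. \<mu> = ad br q"
      proof -
        obtain q where q: "\<mu> = ad br q" using exq by blast
        have "q \<noteq> 0" using mu0 q by (auto simp: ad_def)
        then obtain x l where x: "x \<in> I" "l \<in> L" "br q (br x l) \<noteq> 0" using dprop[OF aoq I] by blast
        have "ad br x \<in> Itilde scale br L I" unfolding Itilde_def using x(1) by (blast intro: gen_ideal.gen)
        moreover have "\<mu> (ad br x l) \<noteq> 0" using x(3) q by (simp add: ad_def)
        ultimately show ?thesis using x(2) by blast
      qed
      show ?thesis using Ii I c1 c2 c3 c4 unfolding ess_def by blast
    qed
    show "center br UNIV = {0} \<and>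
     (\<forall>\<mu> \<in> AQ scale br. \<mu> \<noteq> (\<lambda>_. 0) \<longrightarrow>
        (\<exists>I. lie_ideal scale br L I \<and> Ann br L I = {0}
           \<and> (\<forall>\<alpha> \<in> Itilde scale br L I. \<mu> \<circ> \<alpha> \<in> A0 scale br L)
           \<and> (\<forall>\<alpha> \<in> Itilde scale br L I. \<alpha> \<circ> \<mu> \<in> A0 scale br L)
           \<and> (\<exists>\<alpha> \<in> Itilde scale br L I. \<alpha> \<circ> \<mu> \<noteq> (\<lambda>_. 0))
           \<and> ((\<exists>q. \<mu> = ad br q) \<longrightarrow>
                (\<exists>\<alpha> \<in> Itilde scale br L I. \<exists>x \<in> L. \<mu> (\<alpha> x) \<noteq> 0))))"
      using cen main by blast
  next
    assume R: "center br UNIV = {0} \<and>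
     (\<forall>\<mu> \<in> AQ scale br. \<mu> \<noteq> (\<lambda>_. 0) \<longrightarrow>
        (\<exists>I. lie_ideal scale br L I \<and> Ann br L I = {0}
           \<and> (\<forall>\<alpha> \<in> Itilde scale br L I. \<mu> \<circ> \<alpha> \<in> A0 scale br L)
           \<and> (\<forall>\<alpha> \<in> Itilde scale br L I. \<alpha> \<circ> \<mu> \<in> A0 scale br L)
           \<and> (\<exists>\<alpha> \<in> Itilde scale br L I. \<alpha> \<circ> \<mu> \<noteq> (\<lambda>_. 0))
           \<and> ((\<exists>q. \<mu> = ad br q) \<longrightarrow>
                (\<exists>\<alpha> \<in> Itilde scale br L I. \<exists>x \<in> L. \<mu> (\<alpha> x) \<noteq> 0))))"
    show "algebra_of_quotients scale br L" unfolding algebra_of_quotients_def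
    proof (intro allI impI)
      fix q :: 'q assume q: "q \<noteq> 0"
      have adq: "ad br q \<in> AQ scale br" unfolding AQ_def by (blast intro: gen_alg.gen)
      have adq0: "ad br q \<noteq> (\<lambda>_. 0)"
      proof
        assume "ad br q = (\<lambda>_. 0)"
        hence "\<forall>x. br q x = 0" unfolding ad_def by meson
        hence "q \<in> center br UNIV" unfolding center_def Ann_def by simp
        thus False using R q by blast
      qed
      obtain I where Ii: "lie_ideal scale br L I" and IA: "Ann br L I = {0}"
        and A1: "\<forall>\<alpha> \<in> Itilde scale br L I. ad br q \<circ> \<alpha> \<in> A0 scale br L"
        and A3: "\<exists>\<alpha> \<in> Itilde scale br L I. \<exists>x \<in> L. ad br q (\<alpha> x) \<noteq> 0"
        using conjunct2[OF R, rule_format, OF adq adq0] by blast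
      have I: "ess I" using Ii IA unfolding ess_def by blast
      have F: "br (\<alpha> l) q \<in> L" if a: "\<alpha> \<in> Itilde scale br L I" and l: "l \<in> L" for \<alpha> l
      proof -
        have "(ad br q \<circ> \<alpha>) l \<in> L" using A1 a l unfolding A0_def by blast
        thus ?thesis unfolding ad_def using anti_in by simp
      qed
      define J where "J = {x \<in> I. br x q \<in> L \<and> (\<forall>\<gamma>\<in>AQL scale br L. br (\<gamma> x) q \<in> L)}"
      have IL: "\<alpha> l \<in> J" if a: "\<alpha> \<in> Itilde scale br L I" and l: "l \<in> L" for \<alpha> l
      proof -
        have "\<alpha> l \<in> I" by (rule It_LI[OF Ii a l])
        moreover have "br (\<alpha> l) q \<in> L" by (rule F[OF a l])
        moreover have "br (\<gamma> (\<alpha> l)) q \<in> L" if g: "\<gamma> \<in> AQL scale br L" for \<gamma>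
        proof -
          have "\<gamma> \<circ> \<alpha> \<in> Itilde scale br L I" using g a unfolding Itilde_def by (rule gen_ideal.lmult)
          from F[OF this l] show ?thesis by simp
        qed
        ultimately show ?thesis unfolding J_def by blast
      qed
      have Jsm: "submod scale J" unfolding submod_def
      proof (intro conjI ballI allI)
        show "0 \<in> J" unfolding J_def using sm_0[OF id_sm[OF Ii]] sm_0[OF L_sm] by (auto simp: AQL_lin(3))
      next
        fix x y assume x: "x \<in> J" and y: "y \<in> J"
        show "x + y \<in> J" unfolding J_def
        proof (intro CollectI conjI ballI)
          show "x + y \<in> I" using x y sm_add[OF id_sm[OF Ii]] unfolding J_def by blast
          show "br (x + y) q \<in> L" using x y sm_add[OF L_sm] unfolding J_def by (simp add: addl)
          fix \<gamma> assume g: "\<gamma> \<in> AQL scale br L"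
          show "br (\<gamma> (x + y)) q \<in> L" using x y g sm_add[OF L_sm] unfolding J_def by (simp add: addl AQL_lin(1)[OF g])
        qed
      next
        fix c x assume x: "x \<in> J"
        show "scale c x \<in> J" unfolding J_def
        proof (intro CollectI conjI ballI)
          show "scale c x \<in> I" using x sm_sc[OF id_sm[OF Ii]] unfolding J_def by blast
          show "br (scale c x) q \<in> L" using x sm_sc[OF L_sm] unfolding J_def by (simp add: scl)
          fix \<gamma> assume g: "\<gamma> \<in> AQL scale br L"
          show "br (\<gamma> (scale c x)) q \<in> L" using x g sm_sc[OF L_sm] unfolding J_def by (simp add: scl AQL_lin(2)[OF g])
        qed
      qed
      have Ji: "lie_ideal scale br L J" unfolding lie_ideal_def
      proof (intro conjI ballI)
        show "J \<subseteq> L" unfolding J_def using id_sub[OF Ii] by blast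
        show "submod scale J" by (rule Jsm)
        fix y x assume y: "y \<in> L" and x: "x \<in> J"
        have ady: "ad br y \<in> AQL scale br L" unfolding AQL_def using y by (blast intro: gen_alg.gen)
        show "br y x \<in> J" unfolding J_def
        proof (intro CollectI conjI ballI)
          show "br y x \<in> I" using id_l[OF Ii y] x unfolding J_def by blast
          show "br (br y x) q \<in> L" using x ady unfolding J_def ad_def by blast
          fix \<gamma> assume g: "\<gamma> \<in> AQL scale br L"
          have "\<gamma> \<circ> ad br y \<in> AQL scale br L" using g ady unfolding AQL_def by (rule gen_alg.comp)
          thus "br (\<gamma> (br y x)) q \<in> L" using x unfolding J_def ad_def by fastforce
        qed
      qed
      have J: "ess J"
      proof (rule essI[OF Ji])
        fix a assume aL: "a \<in> L" and az: "\<And>x. x \<in> J \<Longrightarrow> br a x = 0"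
        show "a = 0"
        proof (rule ess_zero[OF ess_brspan[OF I] aL])
          fix y assume y: "y \<in> brspan scale br I"
          show "br a y = 0"
          proof (rule ann_span[OF aL _ y])
            fix k1 k2 assume k1: "k1 \<in> I" and k2: "k2 \<in> I"
            have "ad br k1 \<in> Itilde scale br L I" unfolding Itilde_def using k1 by (blast intro: gen_ideal.gen)
            hence "ad br k1 k2 \<in> J" using IL k2 id_sub[OF Ii] by blast
            thus "br a (br k1 k2) = 0" using az unfolding ad_def by blast
          qed
        qed
      qed
      obtain \<alpha> x where ax: "\<alpha> \<in> Itilde scale br L I" "x \<in> L" "br q (\<alpha> x) \<noteq> 0"
        using A3 unfolding ad_def by blast
      have "\<alpha> x \<in> J" by (rule IL[OF ax(1,2)])
      moreover have "br (\<alpha> x) q \<noteq> 0" using ax(3) by (metis anti neg_equal_0_iff_equal)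
      ultimately have ex: "\<exists>x\<in>J. br x q \<noteq> 0" by blast
      have all: "\<forall>x\<in>J. br x q \<in> L" unfolding J_def by blast
      show "\<exists>I. lie_ideal scale br L I \<and> Ann br L I = {0} \<and> (\<exists>x\<in>I. br x q \<noteq> 0) \<and> (\<forall>x\<in>I. br x q \<in> L)"
        using Ji J ex all unfolding ess_def by blast
    qed
  qed
qed

end
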